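(* Let $\mathcal D$ be an ordered, oriented Descartes configuration. Then the curvature-center coordinate matrix $M_{\mathcal D}$ is an integer matrix if and only if three of its four rows are integer vectors; equivalently, iff $\mathcal D$ contains three circles each having integer signed curvature $b$ and curvature$\times$center $b(x+iy)\in\mathbb Z[i]$.
   Context: Circles are taken in $\hat{\mathbb C}=\mathbb R^2\cup\{\infty\}$; lines count as circles. A Descartes configuration is a set of four mutually tangent circles with disjoint interiors; an ordered, oriented one carries an ordering and a total orientation, with signed curvatures $b_i$ (reciprocal radius, negative if the circle's interior is unbounded, $0$ for lines, all reversed for negative orientation). The curvature-center coordinate matrix $M_{\mathcal D}$ is the $4\times3$ matrix with $i$-th row $(b_i,b_ix_i,b_iy_i)$, $(x_i,y_i)$ the center of the $i$-th circle; for a line the row is $(0,n_x,n_y)$, $n$ the unit normal pointing into its interior half-plane (for a line, "curvature$\times$center" means $n_x+in_y$). *)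

theory Defs
  imports "HOL-Analysis.Analysis"
begin

text \<open>Oriented circles in the extended plane, given with a chosen interior.
  HPlane n d: boundary line Re(cnj n * z) = d (n a unit normal), interior the open
  half-plane Re(cnj n * z) > d, so n points into the interior.\<close>

datatype ocircle = Disk complex real | CoDisk complex real | HPlane complex real

fun wf_circle :: "ocircle \<Rightarrow> bool" where
  "wf_circle (Disk c r) = (r > 0)"
| "wf_circle (CoDisk c r) = (r > 0)"
| "wf_circle (HPlane n d) = (cmod n = 1)"

fun is_line :: "ocircle \<Rightarrow> bool" where
  "is_line (HPlane n d) = True"
| "is_line _ = False"

fun bdry :: "ocircle \<Rightarrow> complex set" where
  "bdry (Disk c r) = sphere c r"
| "bdry (CoDisk c r) = sphere c r"
| "bdry (HPlane n d) = {z. Re (cnj n * z) = d}"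

fun intr :: "ocircle \<Rightarrow> complex set" where
  "intr (Disk c r) = ball c r"
| "intr (CoDisk c r) = - cball c r"
| "intr (HPlane n d) = {z. Re (cnj n * z) > d}"

text \<open>The circle as a subset of the Riemann sphere: None stands for \<infinity>,
  which lies on every line.\<close>
definition bdry_hat :: "ocircle \<Rightarrow> complex option set" where
  "bdry_hat C = Some ` bdry C \<union> (if is_line C then {None} else {})"

definition tangent :: "ocircle \<Rightarrow> ocircle \<Rightarrow> bool" where
  "tangent C D \<longleftrightarrow> (\<exists>!p. p \<in> bdry_hat C \<inter> bdry_hat D)"

definition descartes :: "(4 \<Rightarrow> ocircle) \<Rightarrow> bool" where
  "descartes C \<longleftrightarrow> (\<forall>i. wf_circle (C i)) \<and>
     (\<forall>i j. i \<noteq> j \<longrightarrow> tangent (C i) (C j) \<and> intr (C i) \<inter> intr (C j) = {})"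

fun curv :: "ocircle \<Rightarrow> real" where
  "curv (Disk c r) = 1 / r"
| "curv (CoDisk c r) = - 1 / r"
| "curv (HPlane n d) = 0"

fun curv_center :: "ocircle \<Rightarrow> complex" where
  "curv_center (Disk c r) = c / complex_of_real r"
| "curv_center (CoDisk c r) = - c / complex_of_real r"
| "curv_center (HPlane n d) = n"

text \<open>Ordered, oriented Descartes configuration: an ordered Descartes configuration
  together with a total orientation (True = positive). For the negative orientation
  all interiors are reversed and all signed curvatures (and curvature\<times>centers)
  change sign.\<close>
definition osign :: "bool \<Rightarrow> real" where
  "osign pos = (if pos then 1 else -1)"

definition ocurv :: "(4 \<Rightarrow> ocircle) \<Rightarrow> bool \<Rightarrow> 4 \<Rightarrow> real" where
  "ocurv C pos i = osign pos * curv (C i)"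

definition ocurv_center :: "(4 \<Rightarrow> ocircle) \<Rightarrow> bool \<Rightarrow> 4 \<Rightarrow> complex" where
  "ocurv_center C pos i = complex_of_real (osign pos) * curv_center (C i)"

definition cc_matrix :: "(4 \<Rightarrow> ocircle) \<Rightarrow> bool \<Rightarrow> real^3^4" where
  "cc_matrix C pos = (\<chi> i. vector [ocurv C pos i, Re (ocurv_center C pos i),
                                     Im (ocurv_center C pos i)])"

definition int_row :: "real^3 \<Rightarrow> bool" where
  "int_row v \<longleftrightarrow> (\<forall>k. v $ k \<in> \<int>)"

definition int_matrix :: "real^3^4 \<Rightarrow> bool" where
  "int_matrix M \<longleftrightarrow> (\<forall>i. int_row (M $ i))"

end

theory Submission
  imports Defs
begin

definition ipv :: "real^4 \<Rightarrow> real^4 \<Rightarrow> real" where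
  "ipv u v = (u$1 * v$2 + u$2 * v$1)/2 - u$3 * v$3 - u$4 * v$4"
definition Lm :: "real^4^4" where
  "Lm = (\<chi> i j. if (i=1 \<and> j=2) \<or> (i=2 \<and> j=1) then 1/2 else if i = j \<and> (i = 3 \<or> i = 4) then -1 else 0)"
lemma num4: "(1::4) \<noteq> 2" "(1::4) \<noteq> 3" "(1::4) \<noteq> 4" "(2::4) \<noteq> 3" "(2::4) \<noteq> 4" "(3::4) \<noteq> 4"
  "(2::4) \<noteq> 1" "(3::4) \<noteq> 1" "(4::4) \<noteq> 1" "(3::4) \<noteq> 2" "(4::4) \<noteq> 2" "(4::4) \<noteq> 3"
  by simp_all
lemma Lm_entries: "Lm$1$1 = 0" "Lm$1$2 = 1/2" "Lm$1$3 = 0" "Lm$1$4 = 0"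
  "Lm$2$1 = 1/2" "Lm$2$2 = 0" "Lm$2$3 = 0" "Lm$2$4 = 0"
  "Lm$3$1 = 0" "Lm$3$2 = 0" "Lm$3$3 = -1" "Lm$3$4 = 0"
  "Lm$4$1 = 0" "Lm$4$2 = 0" "Lm$4$3 = 0" "Lm$4$4 = -1"
  by (simp_all add: Lm_def num4)
lemma mult_Lm: "(A ** Lm ** transpose B) $ i $ j = ipv (A$i) (B$j)"
  unfolding matrix_matrix_mult_def transpose_def
  by (simp add: sum_4 Lm_entries ipv_def field_simps)

lemma sign3_aux:
  assumes "a \<noteq> b" "c \<noteq> d" "e \<noteq> f"
  shows "sign (Transposition.transpose a b \<circ> (Transposition.transpose c d \<circ> Transposition.transpose e f)) = -1"
  using assms by (simp add: sign_compose permutation_compose permutation_swap_id sign_swap_id)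

lemma det_4:
  "det (A::'a::comm_ring_1^4^4) =
     A$1$1 * (A$2$2 * A$3$3 * A$4$4 + A$2$3 * A$3$4 * A$4$2 + A$2$4 * A$3$2 * A$4$3
             - A$2$2 * A$3$4 * A$4$3 - A$2$3 * A$3$2 * A$4$4 - A$2$4 * A$3$3 * A$4$2)
   - A$1$2 * (A$2$1 * A$3$3 * A$4$4 + A$2$3 * A$3$4 * A$4$1 + A$2$4 * A$3$1 * A$4$3
             - A$2$1 * A$3$4 * A$4$3 - A$2$3 * A$3$1 * A$4$4 - A$2$4 * A$3$3 * A$4$1)
   + A$1$3 * (A$2$1 * A$3$2 * A$4$4 + A$2$2 * A$3$4 * A$4$1 + A$2$4 * A$3$1 * A$4$2
             - A$2$1 * A$3$4 * A$4$2 - A$2$2 * A$3$1 * A$4$4 - A$2$4 * A$3$2 * A$4$1)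
   - A$1$4 * (A$2$1 * A$3$2 * A$4$3 + A$2$2 * A$3$3 * A$4$1 + A$2$3 * A$3$1 * A$4$2
             - A$2$1 * A$3$3 * A$4$2 - A$2$2 * A$3$1 * A$4$3 - A$2$3 * A$3$2 * A$4$1)"
proof -
  have f1: "finite {2::4, 3, 4}" "1 \<notin> {2::4, 3, 4}"
    by auto
  have f2: "finite {3::4, 4}" "2 \<notin> {3::4, 4}"
    by auto
  have f3: "finite {4::4}" "3 \<notin> {4::4}"
    by auto
  show ?thesis
    unfolding det_def UNIV_4
    unfolding sum_over_permutations_insert[OF f1]
    unfolding sum_over_permutations_insert[OF f2]
    unfolding sum_over_permutations_insert[OF f3]
    unfolding permutes_sing
    by (simp add: sign_swap_id permutation_swap_id sign_compose sign_id swap_id_eq sign3_aux algebra_simps)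
qed

lemma rat_sq_int:
  fixes x :: real
  assumes "x \<in> \<rat>" "x^2 \<in> \<int>"
  shows "x \<in> \<int>"
proof -
  obtain a b where ab: "b > 0" "coprime a b" "x = of_int a / of_int b"
    using Rats_cases'[OF assms(1)] by metis
  obtain m where m: "x^2 = of_int m" using assms(2) Ints_cases by metis
  have "of_int (a^2) = (of_int (m * b^2) :: real)"
    using m ab(1) ab(3) by (simp add: field_simps power2_eq_square)
  then have "a^2 = m * b^2" by (simp only: of_int_eq_iff)
  then have "b dvd a^2" by simp
  moreover have "coprime b (a^2)" using ab(2) by (simp add: coprime_commute)
  ultimately have "is_unit b"
    by (meson coprime_common_divisor dvd_refl)
  then have "b = 1" using ab(1) by simp
  then show ?thesis using ab(3) by simp
qed

lemma some_b_nonzero: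
  fixes W :: "real^4^4"
  assumes gram: "\<And>i j. ipv (W$i) (W$j) = (if i = j then -1 else 1)"
  shows "\<exists>j. j \<noteq> 4 \<and> W$j$2 \<noteq> 0"
proof (rule ccontr)
  assume "\<not> ?thesis"
  then have z: "W$1$2 = 0" "W$2$2 = 0" "W$3$2 = 0" by (meson num4)+
  have e: "ipv (W$1) (W$1) = -1" "ipv (W$2) (W$2) = -1" "ipv (W$3) (W$3) = -1"
    "ipv (W$1) (W$2) = 1" "ipv (W$1) (W$3) = 1" "ipv (W$2) (W$3) = 1"
    using gram num4 by simp_all
  have "(W$1$3 + W$2$3 + W$3$3)^2 + (W$1$4 + W$2$4 + W$3$4)^2 = -3"
    using e z unfolding ipv_def power2_eq_square by (simp add: algebra_simps) 
  moreover have "(W$1$3 + W$2$3 + W$3$3)^2 + (W$1$4 + W$2$4 + W$3$4)^2 \<ge> 0" by simp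
  ultimately show False by linarith
qed

lemma p_rat:
  fixes W :: "real^4^4"
  assumes gram: "\<And>i j. ipv (W$i) (W$j) = (if i = j then -1 else 1)"
  and ints: "\<And>i k. i \<noteq> 4 \<Longrightarrow> k \<noteq> 1 \<Longrightarrow> W$i$k \<in> \<int>"
  and i: "i \<noteq> 4"
  shows "W$i$1 \<in> \<rat>"
proof -
  have zq: "W$i$k \<in> \<rat>" if "k \<noteq> 1" for k using ints[OF i that] Ints_subset_Rats by blast
  have n21: "(2::4) \<noteq> 1" "(3::4) \<noteq> 1" "(4::4) \<noteq> 1" by (simp_all add: num4)
  show ?thesis
  proof (cases "W$i$2 = 0")
    case False
    have "ipv (W$i) (W$i) = -1" using gram by simp
    then have "W$i$1 = (W$i$3 * W$i$3 + W$i$4 * W$i$4 - 1) / W$i$2"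
      using False unfolding ipv_def by (simp add: field_simps)
    then show ?thesis using zq n21 by simp
  next
    case True
    obtain j where j: "j \<noteq> 4" "W$j$2 \<noteq> 0" using some_b_nonzero[OF gram] by blast
    have ji: "j \<noteq> i" using j True by auto
    have "ipv (W$i) (W$j) = 1" using gram ji by simp
    then have "W$i$1 = 2 * (1 + W$i$3 * W$j$3 + W$i$4 * W$j$4) / W$j$2"
      using True j(2) unfolding ipv_def by (simp add: field_simps)
    moreover have "W$j$k \<in> \<rat>" if "k \<noteq> 1" for k using ints[OF j(1) that] Ints_subset_Rats by blast
    ultimately show ?thesis using zq n21 by simp
  qed
qed


lemma ipv_sym: "ipv u v = ipv v u" by (simp add: ipv_def algebra_simps)

lemma det_Ints: "(\<And>i j. M$i$j \<in> \<int>) \<Longrightarrow> det (M::real^'n^'n) \<in> \<int>"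
  unfolding det_def by (intro Ints_sum Ints_mult Ints_prod) auto

lemma det_Rats: "(\<And>i j. M$i$j \<in> \<rat>) \<Longrightarrow> det (M::real^'n^'n) \<in> \<rat>"
  unfolding det_def by (intro Rats_sum Rats_mult Rats_prod) auto

lemma core:
  fixes W :: "real^4^4"
  assumes gram: "\<And>i j. ipv (W$i) (W$j) = (if i = j then -1 else 1)"
  and ints: "\<And>i k. i \<noteq> 4 \<Longrightarrow> k \<noteq> 1 \<Longrightarrow> W$i$k \<in> \<int>"
  and k: "k \<noteq> 1"
  shows "W$4$k \<in> \<int>"
proof -
  define Gm :: "real^4^4" where "Gm = (\<chi> i j. if i = j then -1 else 1)"
  have WG: "W ** Lm ** transpose W = Gm" by (simp add: vec_eq_iff mult_Lm gram Gm_def)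
  have dG: "det Gm = -16" by (simp add: det_4 Gm_def num4)
  have dL: "det Lm = -1/4" by (simp add: det_4 Lm_entries)
  have "det (W ** Lm ** transpose W) = det W * det Lm * det W" by (simp add: det_mul)
  then have dW2: "det W * det W = 64" using WG dG dL by simp
  then have "(det W - 8) * (det W + 8) = 0" by (simp add: algebra_simps)
  then have "det W = 8 \<or> det W = -8" by auto
  then have dWq: "det W \<in> \<rat>" by auto
  define f :: "real^4" where
    "f = (\<chi> l. if k = 2 then (if l = 1 then 2 else 0) else (if l = k then -1 else 0))"
  have k234: "k = 2 \<or> k = 3 \<or> k = 4" using k exhaust_4 by blast
  have ipf: "ipv u f = u$k" for u
    using k234 by (auto simp: ipv_def f_def num4)
  have ipf': "ipv f u = u$k" for u using ipf ipv_sym by metis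
  have fq: "f$j \<in> \<rat>" for j by (simp add: f_def)
  have fk: "f$k \<in> \<int>" by (simp add: f_def)
  define A :: "real^4^4" where "A = (\<chi> i. if i = 4 then f else W$i)"
  define Pm :: "real^4^4" where "Pm = (\<chi> i j. if j = 4 then W$i$k else if i = j then -1 else 1)"
  define Qm :: "real^4^4" where "Qm = (\<chi> i j. if i = 4 \<and> j = 4 then f$k else if j = 4 then W$i$k
       else if i = 4 then W$j$k else if i = j then -1 else 1)"
  have WA: "W ** Lm ** transpose A = Pm"
    by (simp add: vec_eq_iff mult_Lm gram Pm_def A_def ipf)
  have AA: "A ** Lm ** transpose A = Qm"
    by (auto simp add: vec_eq_iff mult_Lm gram Qm_def A_def ipf ipf')
  have dPm: "det Pm = 4 * (W$4$k - W$1$k - W$2$k - W$3$k)"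
    by (simp add: det_4 Pm_def num4 algebra_simps)
  have QmZ: "det Qm \<in> \<int>"
    by (rule det_Ints) (use ints fk k in \<open>auto simp: Qm_def\<close>)
  have Aq: "det A \<in> \<rat>"
  proof (rule det_Rats)
    fix i j
    show "A$i$j \<in> \<rat>"
    proof (cases "i = 4")
      case True then show ?thesis by (simp add: A_def fq)
    next
      case False
      then show ?thesis
        using p_rat[OF gram ints False] ints[OF False] Ints_subset_Rats
        by (cases "j = 1") (auto simp: A_def)
    qed
  qed
  have e1: "det Pm = det W * det Lm * det A"
    using WA by (metis det_mul det_transpose)
  have e2: "det Qm = det A * det Lm * det A"
    using AA by (metis det_mul det_transpose)
  define d where "d = W$4$k - W$1$k - W$2$k - W$3$k"
  have d1: "16 * d = - (det W * det A)" using e1 dPm dL unfolding d_def by simp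
  have "256 * (d * d) = (det W * det W) * (det A * det A)"
    using d1 by algebra
  then have "d * d = - det Qm" using dW2 e2 dL by simp
  then have dsq: "d^2 \<in> \<int>" using QmZ by (simp add: power2_eq_square)
  have "d = - (det W * det A) / 16" using d1 by simp
  then have "d \<in> \<rat>" using dWq Aq by simp
  then have "d \<in> \<int>" using dsq rat_sq_int by blast
  moreover have "W$1$k \<in> \<int>" "W$2$k \<in> \<int>" "W$3$k \<in> \<int>" using ints k num4 by auto
  ultimately have "d + W$1$k + W$2$k + W$3$k \<in> \<int>" by simp
  then show ?thesis unfolding d_def by simp
qed


lemma balls_disj_dist:
  fixes c1 c2 :: complex
  assumes "ball c1 r1 \<inter> ball c2 r2 = {}" "r1 > 0" "r2 > 0"
  shows "dist c1 c2 \<ge> r1 + r2"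
proof (rule ccontr)
  assume "\<not> ?thesis"
  then have lt: "dist c1 c2 < r1 + r2" by simp
  define t where "t = r1 / (r1 + r2)"
  define z where "z = c1 + of_real t * (c2 - c1)"
  have t01: "0 < t" "t < 1" using assms unfolding t_def by (auto simp: field_simps)
  have "dist c1 z = t * dist c1 c2"
    using t01 by (simp add: z_def dist_norm norm_mult norm_minus_commute)
  also have "\<dots> < t * (r1 + r2)" using lt t01 by simp
  also have "\<dots> = r1" using assms unfolding t_def by (simp add: field_simps)
  finally have "z \<in> ball c1 r1" by simp
  have "c2 - z = of_real (1 - t) * (c2 - c1)" by (simp add: z_def algebra_simps)
  then have "cmod (c2 - z) = cmod (of_real (1 - t) * (c2 - c1))" by simp
  also have "\<dots> = \<bar>1 - t\<bar> * cmod (c2 - c1)" by (simp only: norm_mult norm_of_real)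
  finally have "dist c2 z = (1 - t) * dist c1 c2"
    using t01 norm_minus_commute[of c2 c1] by (simp add: dist_norm dist_commute)
  also have "\<dots> < (1 - t) * (r1 + r2)" using lt t01 by simp
  also have "\<dots> = r2" using assms unfolding t_def by (simp add: field_simps)
  finally have "z \<in> ball c2 r2" by simp
  with \<open>z \<in> ball c1 r1\<close> assms(1) show False by blast
qed

lemma codisks_meet:
  fixes c1 c2 :: complex
  shows "- cball c1 r1 \<inter> - cball c2 r2 \<noteq> {}"
proof -
  define s where "s = \<bar>r1\<bar> + \<bar>r2\<bar> + dist c1 c2 + 1"
  define z where "z = c1 + of_real s"
  have "dist c1 z = \<bar>s\<bar>"
    by (simp add: z_def dist_norm)
  then have d1: "dist c1 z = \<bar>r1\<bar> + \<bar>r2\<bar> + dist c1 c2 + 1"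
    unfolding s_def by simp
  have "dist c1 z \<le> dist c1 c2 + dist c2 z" by (rule dist_triangle)
  then have "dist c2 z > r2" using d1 abs_ge_self[of r2] abs_ge_zero[of r1] by linarith
  moreover have "dist c1 z > r1" using d1 abs_ge_self[of r1] abs_ge_zero[of r2] zero_le_dist[of c1 c2] by linarith
  ultimately have "z \<in> - cball c1 r1 \<inter> - cball c2 r2" by simp
  then show ?thesis by blast
qed

lemma codisk_halfplane_meet:
  fixes c n :: complex
  assumes "cmod n = 1"
  shows "- cball c r \<inter> {z. Re (cnj n * z) > d} \<noteq> {}"
proof -
  define s where "s = \<bar>d\<bar> + cmod c + \<bar>r\<bar> + 1"
  define z where "z = n * of_real s"
  have nn: "cnj n * n = 1" using assms by (metis complex_norm_square mult.commute of_real_1 power_one)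
  have "Re (cnj n * z) = s" unfolding z_def by (simp add: mult.assoc[symmetric] nn)
  then have h1: "Re (cnj n * z) > d" unfolding s_def
    using abs_ge_self[of d] norm_ge_zero[of c] abs_ge_zero[of r] by linarith
  have a1: "cmod z = \<bar>s\<bar>" unfolding z_def using assms by (simp add: norm_mult)
  have a2: "\<bar>s\<bar> = s" unfolding s_def by simp
  have a3: "dist c z = cmod (z - c)" by (simp add: dist_norm norm_minus_commute)
  have h2: "dist c z > r"
    using a1 a2 a3 norm_triangle_ineq2[of z c] abs_ge_self[of r] abs_ge_zero[of d] unfolding s_def
    by linarith
  from h1 h2 have "z \<in> - cball c r \<inter> {z. Re (cnj n * z) > d}" by simp
  then show ?thesis by blast
qed

lemma halfplanes_meet_same:
  fixes n :: complex
  assumes "cmod n = 1"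
  shows "{z. Re (cnj n * z) > d1} \<inter> {z. Re (cnj n * z) > d2} \<noteq> {}"
proof -
  have nn: "cnj n * n = 1" using assms by (metis complex_norm_square mult.commute of_real_1 power_one)
  define z where "z = n * of_real (\<bar>d1\<bar> + \<bar>d2\<bar> + 1)"
  have "Re (cnj n * z) = \<bar>d1\<bar> + \<bar>d2\<bar> + 1" unfolding z_def by (simp add: mult.assoc[symmetric] nn)
  then have "Re (cnj n * z) > d1" "Re (cnj n * z) > d2"
    using abs_ge_self[of d1] abs_ge_self[of d2] abs_ge_zero[of d1] abs_ge_zero[of d2] by linarith+
  then have "z \<in> {z. Re (cnj n * z) > d1} \<inter> {z. Re (cnj n * z) > d2}"
    by (simp only: Int_iff mem_Collect_eq)
  then show ?thesis by blast
qed

lemma disk_halfplane_le: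
  fixes c n :: complex
  assumes "cmod n = 1" "r > 0" "ball c r \<inter> {z. Re (cnj n * z) > d} = {}"
  shows "Re (cnj n * c) + r \<le> d"
proof (rule ccontr)
  assume nt: "\<not> ?thesis"
  define e where "e = d - Re (cnj n * c)"
  have er: "e < r" using nt unfolding e_def by simp
  define s where "s = (r + max e (-r)) / 2"
  have s1: "\<bar>s\<bar> < r" "s > e" using er assms(2) unfolding s_def by auto
  have nn: "cnj n * n = 1" using assms by (metis complex_norm_square mult.commute of_real_1 power_one)
  define z where "z = c + n * of_real s"
  have "dist c z = \<bar>s\<bar>" unfolding z_def using assms(1) by (simp add: dist_norm norm_mult)
  then have "z \<in> ball c r" using s1 by simp
  moreover have "Re (cnj n * z) = Re (cnj n * c) + s"
    unfolding z_def by (simp add: distrib_left mult.assoc[symmetric] nn)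
  then have "Re (cnj n * z) > d" using s1 unfolding e_def by simp
  ultimately show False using assms(3) by blast
qed

lemma re_cnj_le:
  fixes n w :: complex
  assumes "cmod n = 1"
  shows "Re (cnj n * w) \<le> cmod w"
  using complex_Re_le_cmod[of "cnj n * w"] assms by (simp add: norm_mult)


lemma lines_meet:
  fixes n1 n2 :: complex
  assumes "cmod n1 = 1" "Im (cnj n1 * n2) \<noteq> 0"
  shows "\<exists>z. Re (cnj n1 * z) = d1 \<and> Re (cnj n2 * z) = d2"
proof -
  define a where "a = Re n1"
  define b where "b = Im n1"
  define c where "c = Re n2"
  define e where "e = Im n2"
  have ab: "a^2 + b^2 = 1" using assms(1) cmod_power2[of n1] unfolding a_def b_def by simp
  have ne: "a * e - b * c \<noteq> 0" using assms(2) unfolding a_def b_def c_def e_def by simp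
  define t where "t = (d2 - (a * c + b * e) * d1) / (a * e - b * c)"
  define z where "z = Complex (a*d1 - b*t) (b*d1 + a*t)"
  have "Re (cnj n1 * z) = (a^2 + b^2) * d1"
    unfolding z_def a_def b_def by (simp add: algebra_simps power2_eq_square)
  then have 1: "Re (cnj n1 * z) = d1" using ab by simp
  have "Re (cnj n2 * z) = d1 * (a * c + b * e) + t * (a * e - b * c)"
    unfolding z_def a_def b_def c_def e_def by (simp add: algebra_simps)
  also have "\<dots> = d2" unfolding t_def using ne by (simp add: field_simps)
  finally show ?thesis using 1 by blast
qed

fun pco :: "ocircle \<Rightarrow> real" where
  "pco (Disk c r) = ((cmod c)^2 - r^2) / r"
| "pco (CoDisk c r) = - (((cmod c)^2 - r^2) / r)"
| "pco (HPlane n d) = 2 * d"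

definition lv :: "ocircle \<Rightarrow> real^4" where
  "lv C = (\<chi> l. if l = 1 then pco C else if l = 2 then curv C
              else if l = 3 then Re (curv_center C) else Im (curv_center C))"

lemma lv_comp: "lv C $ 1 = pco C" "lv C $ 2 = curv C" "lv C $ 3 = Re (curv_center C)"
  "lv C $ 4 = Im (curv_center C)"
  by (simp_all add: lv_def num4)

lemma ipv_lv: "ipv (lv C) (lv D) = (pco C * curv D + curv C * pco D)/2
   - Re (curv_center C) * Re (curv_center D) - Im (curv_center C) * Im (curv_center D)"
  by (simp add: ipv_def lv_comp)

lemma lv_CoDisk: "lv (CoDisk c r) = - lv (Disk c r)"
  by (simp add: vec_eq_iff lv_def)

lemma ipv_neg: "ipv (- u) v = - ipv u v" "ipv u (- v) = - ipv u v"
  by (simp_all add: ipv_def field_simps)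

lemma ip_DD:
  assumes "r1 > 0" "r2 > 0"
  shows "ipv (lv (Disk c1 r1)) (lv (Disk c2 r2)) = ((dist c1 c2)^2 - r1^2 - r2^2) / (2*r1*r2)"
proof -
  have d: "(dist c1 c2)^2 = (Re c1 - Re c2)^2 + (Im c1 - Im c2)^2"
    by (simp add: dist_norm cmod_power2)
  show ?thesis unfolding ipv_lv d pco.simps curv.simps curv_center.simps cmod_power2 using assms
    by (simp add: field_simps power2_eq_square)
qed

lemma ip_DC:
  assumes "r1 > 0" "r2 > 0"
  shows "ipv (lv (Disk c1 r1)) (lv (CoDisk c2 r2)) = - (((dist c1 c2)^2 - r1^2 - r2^2) / (2*r1*r2))"
proof -
  have "ipv (lv (Disk c1 r1)) (lv (CoDisk c2 r2)) = - ipv (lv (Disk c1 r1)) (lv (Disk c2 r2))"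
    unfolding ipv_lv using assms by (simp add: algebra_simps) (simp add: field_simps)
  then show ?thesis using ip_DD[OF assms] by simp
qed

lemma ip_DH:
  assumes "r > 0"
  shows "ipv (lv (Disk c r)) (lv (HPlane n d)) = (d - Re (cnj n * c)) / r"
  unfolding ipv_lv using assms by (simp add: field_simps)

lemma ip_HH: "ipv (lv (HPlane n1 d1)) (lv (HPlane n2 d2)) = - (Re n1 * Re n2 + Im n1 * Im n2)"
  unfolding ipv_lv by simp

lemma ip_self_Disk:
  assumes "r > 0"
  shows "ipv (lv (Disk c r)) (lv (Disk c r)) = -1"
  using assms unfolding ipv_lv pco.simps curv.simps curv_center.simps cmod_power2
  by (simp add: field_simps power2_eq_square)

lemma ip_self:
  assumes "wf_circle C"
  shows "ipv (lv C) (lv C) = -1"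
proof (cases C)
  case (Disk c r)
  then show ?thesis using assms ip_self_Disk by simp
next
  case (CoDisk c r)
  then show ?thesis using assms ip_self_Disk by (simp add: lv_CoDisk ipv_neg)
next
  case (HPlane n d)
  then show ?thesis using assms cmod_power2[of n] unfolding ipv_lv
    by (simp add: power2_eq_square)
qed


lemma bdry_hat_Some: "Some z \<in> bdry_hat C \<longleftrightarrow> z \<in> bdry C"
  by (auto simp: bdry_hat_def)

lemma bdry_hat_None: "None \<in> bdry_hat C \<longleftrightarrow> is_line C"
  by (auto simp: bdry_hat_def)

lemma tangent_common:
  assumes "tangent C D"
  obtains p where "p \<in> bdry_hat C" "p \<in> bdry_hat D"
  using assms unfolding tangent_def by blast

lemma tangent_sym: "tangent C D \<Longrightarrow> tangent D C"
  by (simp add: tangent_def Int_commute)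

lemma tangent_nonline:
  assumes "tangent C D" "\<not> is_line C"
  obtains z where "z \<in> bdry C" "z \<in> bdry D"
proof -
  obtain p where p: "p \<in> bdry_hat C" "p \<in> bdry_hat D" using tangent_common[OF assms(1)] by blast
  then obtain z where "p = Some z" using assms(2) bdry_hat_None by (cases p) auto
  then show ?thesis using p that bdry_hat_Some by auto
qed

lemma DC_case:
  assumes r: "r1 > 0" "r2 > 0"
  and dj: "ball c1 r1 \<inter> - cball c2 r2 = {}"
  and z: "dist c1 z = r1" "dist c2 z = r2"
  shows "ipv (lv (Disk c1 r1)) (lv (CoDisk c2 r2)) = 1"
proof -
  have "ball c1 r1 \<subseteq> cball c2 r2" using dj by blast
  then have "dist c1 c2 + r1 \<le> r2 \<or> r1 \<le> 0" using ball_subset_cball_iff[of c1 r1 c2 r2] by blast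
  then have le: "dist c1 c2 + r1 \<le> r2" using r by auto
  have "dist c2 z \<le> dist c2 c1 + dist c1 z" by (rule dist_triangle)
  then have dd: "dist c1 c2 = r2 - r1" using le z by (simp add: dist_commute)
  have e: "(r2 - r1)^2 - r1^2 - r2^2 = -(2*r1*r2)" by (simp add: power2_eq_square algebra_simps)
  show ?thesis unfolding ip_DC[OF r] dd e using r by simp
qed

lemma DH_case:
  assumes r: "r > 0" and n: "cmod n = 1"
  and dj: "ball c r \<inter> {z. Re (cnj n * z) > d} = {}"
  and z: "dist c z = r" "Re (cnj n * z) = d"
  shows "ipv (lv (Disk c r)) (lv (HPlane n d)) = 1"
proof -
  have le: "Re (cnj n * c) + r \<le> d" by (rule disk_halfplane_le[OF n r dj])
  have "Re (cnj n * (z - c)) \<le> cmod (z - c)" by (rule re_cnj_le[OF n])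
  moreover have "cmod (z - c) = r" using z by (simp add: dist_norm norm_minus_commute)
  moreover have "Re (cnj n * (z - c)) = d - Re (cnj n * c)" using z by (simp add: algebra_simps)
  ultimately have "d = Re (cnj n * c) + r" using le by linarith
  then show ?thesis using r by (simp add: ip_DH)
qed

lemma HH_case:
  assumes n: "cmod n1 = 1" "cmod n2 = 1"
  and tg: "tangent (HPlane n1 d1) (HPlane n2 d2)"
  and dj: "{z. Re (cnj n1 * z) > d1} \<inter> {z. Re (cnj n2 * z) > d2} = {}"
  shows "ipv (lv (HPlane n1 d1)) (lv (HPlane n2 d2)) = 1"
proof -
  define u where "u = cnj n1 * n2"
  have None_in: "None \<in> bdry_hat (HPlane n1 d1) \<inter> bdry_hat (HPlane n2 d2)"
    by (simp add: bdry_hat_None)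
  have imu: "Im u = 0"
  proof (rule ccontr)
    assume "Im u \<noteq> 0"
    then obtain z where z: "Re (cnj n1 * z) = d1" "Re (cnj n2 * z) = d2"
      using lines_meet[OF n(1)] unfolding u_def by blast
    then have "Some z \<in> bdry_hat (HPlane n1 d1) \<inter> bdry_hat (HPlane n2 d2)"
      by (simp add: bdry_hat_Some)
    then show False using None_in tg unfolding tangent_def by auto
  qed
  have nn: "n1 * cnj n1 = 1" using n(1) by (metis complex_norm_square of_real_1 power_one)
  have "cmod u = 1" unfolding u_def using n by (simp add: norm_mult)
  then have "(Re u)^2 = 1" using cmod_power2[of u] imu by simp
  then have "Re u = 1 \<or> Re u = -1" by (simp add: power2_eq_1_iff)
  moreover have n2u: "n2 = n1 * u" unfolding u_def using nn by (simp add: mult.assoc[symmetric])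
  moreover have "Re u \<noteq> 1"
  proof
    assume "Re u = 1"
    then have "u = 1" using imu by (simp add: complex_eq_iff)
    then have "n2 = n1" using n2u by simp
    then show False using dj halfplanes_meet_same[OF n(1)] by simp
  qed
  ultimately have "u = -1" using imu by (simp add: complex_eq_iff)
  then have "n2 = - n1" using n2u by simp
  then show ?thesis using n(1) cmod_power2[of n1] by (simp add: ip_HH power2_eq_square)
qed

lemma pair_ip:
  assumes wf: "wf_circle C" "wf_circle D" and tg: "tangent C D"
  and dj: "intr C \<inter> intr D = {}"
  shows "ipv (lv C) (lv D) = 1"
proof (cases C)
  case (Disk c1 r1)
  then obtain z where z: "z \<in> bdry C" "z \<in> bdry D" using tangent_nonline[OF tg] by auto
  show ?thesis
  proof (cases D)
    case (Disk c2 r2)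
    have r: "r1 > 0" "r2 > 0" using wf \<open>C = Disk c1 r1\<close> Disk by auto
    have ge: "dist c1 c2 \<ge> r1 + r2"
      using balls_disj_dist[of c1 r1 c2 r2] dj r \<open>C = Disk c1 r1\<close> Disk by auto
    have "dist c1 c2 \<le> dist c1 z + dist z c2" by (rule dist_triangle)
    then have "dist c1 c2 = r1 + r2" using ge z \<open>C = Disk c1 r1\<close> Disk by (simp add: dist_commute)
    then show ?thesis using r \<open>C = Disk c1 r1\<close> Disk by (simp add: ip_DD field_simps power2_eq_square)
  next
    case (CoDisk c2 r2)
    then show ?thesis using DC_case[of r1 r2 c1 c2 z] wf dj z \<open>C = Disk c1 r1\<close> by auto
  next
    case (HPlane n d)
    then show ?thesis using DH_case[of r1 n c1 d z] wf dj z \<open>C = Disk c1 r1\<close> by auto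
  qed
next
  case (CoDisk c1 r1)
  show ?thesis
  proof (cases D)
    case (Disk c2 r2)
    obtain z where z: "z \<in> bdry C" "z \<in> bdry D" using tangent_nonline[OF tg] CoDisk by auto
    have "ipv (lv (Disk c2 r2)) (lv (CoDisk c1 r1)) = 1"
      using DC_case[of r2 r1 c2 c1 z] wf dj z CoDisk Disk by (auto simp: Int_commute)
    then show ?thesis using CoDisk Disk ipv_sym by metis
  next
    case (CoDisk c2 r2)
    then show ?thesis using dj codisks_meet \<open>C = CoDisk c1 r1\<close> by auto
  next
    case (HPlane n d)
    then show ?thesis using dj codisk_halfplane_meet wf \<open>C = CoDisk c1 r1\<close> by auto
  qed
next
  case (HPlane n1 d1)
  show ?thesis
  proof (cases D)
    case (Disk c2 r2)
    obtain z where z: "z \<in> bdry D" "z \<in> bdry C"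
      using tangent_nonline[OF tangent_sym[OF tg]] Disk by auto
    have "ipv (lv (Disk c2 r2)) (lv (HPlane n1 d1)) = 1"
      using DH_case[of r2 n1 c2 d1 z] wf dj z HPlane Disk by (auto simp: Int_commute)
    then show ?thesis using HPlane Disk ipv_sym by metis
  next
    case (CoDisk c2 r2)
    then show ?thesis using dj codisk_halfplane_meet wf HPlane by (auto simp: Int_commute)
  next
    case (HPlane n2 d2)
    then show ?thesis using HH_case[of n1 n2 d1 d2] wf dj tg \<open>C = HPlane n1 d1\<close> by auto
  qed
qed


definition olv :: "(4 \<Rightarrow> ocircle) \<Rightarrow> bool \<Rightarrow> 4 \<Rightarrow> real^4" where
  "olv C pos i = osign pos *\<^sub>R lv (C i)"

lemma osign_sq: "osign pos * osign pos = 1"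
  by (simp add: osign_def)

lemma ipv_scale: "ipv (a *\<^sub>R u) (a *\<^sub>R v) = (a * a) * ipv u v"
  by (simp add: ipv_def algebra_simps)

lemma olv_gram:
  assumes "descartes C"
  shows "ipv (olv C pos i) (olv C pos j) = (if i = j then -1 else 1)"
proof -
  have "ipv (olv C pos i) (olv C pos j) = ipv (lv (C i)) (lv (C j))"
    unfolding olv_def ipv_scale osign_sq by simp
  also have "\<dots> = (if i = j then -1 else 1)"
    using assms ip_self pair_ip unfolding descartes_def by auto
  finally show ?thesis .
qed

lemma cc_entries:
  "cc_matrix C pos $ j $ 1 = olv C pos j $ 2"
  "cc_matrix C pos $ j $ 2 = olv C pos j $ 3"
  "cc_matrix C pos $ j $ 3 = olv C pos j $ 4"
  by (simp_all add: cc_matrix_def olv_def lv_comp ocurv_def ocurv_center_def)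

lemma int_row_cc:
  "int_row (cc_matrix C pos $ j) \<longleftrightarrow>
     olv C pos j $ 2 \<in> \<int> \<and> olv C pos j $ 3 \<in> \<int> \<and> olv C pos j $ 4 \<in> \<int>"
  unfolding int_row_def forall_3 cc_entries by simp

lemma int_row_cc':
  "int_row (cc_matrix C pos $ j) \<longleftrightarrow>
     ocurv C pos j \<in> \<int> \<and> Re (ocurv_center C pos j) \<in> \<int> \<and> Im (ocurv_center C pos j) \<in> \<int>"
  unfolding int_row_def forall_3 by (simp add: cc_matrix_def)

definition sw :: "4 \<Rightarrow> 4 \<Rightarrow> 4" where
  "sw i m = (if m = 4 then i else if m = i then 4 else m)"

lemma fourth_row:
  assumes D: "descartes C"
  and others: "\<forall>j. j \<noteq> i \<longrightarrow> int_row (cc_matrix C pos $ j)"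
  shows "int_row (cc_matrix C pos $ i)"
proof -
  define W :: "real^4^4" where "W = (\<chi> m. olv C pos (sw i m))"
  have swinj: "sw i a = sw i b \<longleftrightarrow> a = b" for a b
    unfolding sw_def by auto
  have gram: "ipv (W$a) (W$b) = (if a = b then -1 else 1)" for a b
    unfolding W_def using olv_gram[OF D, of pos "sw i a" "sw i b"] swinj by simp
  have ints: "W$m$k \<in> \<int>" if "m \<noteq> 4" "k \<noteq> 1" for m k
  proof -
    have "sw i m \<noteq> i" using that(1) unfolding sw_def by auto
    then have r: "int_row (cc_matrix C pos $ sw i m)" using others by blast
    have "k = 2 \<or> k = 3 \<or> k = 4" using that(2) exhaust_4 by blast
    then show ?thesis using r unfolding int_row_cc W_def by auto
  qed
  have "W$4$k \<in> \<int>" if "k \<noteq> 1" for k using core[OF gram ints that] by blast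
  moreover have "W$4 = olv C pos i" unfolding W_def sw_def by simp
  ultimately show ?thesis unfolding int_row_cc using num4 by auto
qed

theorem theorem9p1:
  fixes C :: "4 \<Rightarrow> ocircle" and pos :: bool
  assumes "descartes C"
  shows "(int_matrix (cc_matrix C pos) \<longleftrightarrow>
            (\<exists>i::4. \<forall>j. j \<noteq> i \<longrightarrow> int_row (cc_matrix C pos $ j)))
       \<and> (int_matrix (cc_matrix C pos) \<longleftrightarrow>
            (\<exists>i::4. \<forall>j. j \<noteq> i \<longrightarrow>
               ocurv C pos j \<in> \<int> \<and> Re (ocurv_center C pos j) \<in> \<int>
               \<and> Im (ocurv_center C pos j) \<in> \<int>))"
proof -
  have 1: "int_matrix (cc_matrix C pos) \<longleftrightarrow>
            (\<exists>i::4. \<forall>j. j \<noteq> i \<longrightarrow> int_row (cc_matrix C pos $ j))"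
  proof
    assume "int_matrix (cc_matrix C pos)"
    then show "\<exists>i::4. \<forall>j. j \<noteq> i \<longrightarrow> int_row (cc_matrix C pos $ j)"
      unfolding int_matrix_def by blast
  next
    assume "\<exists>i::4. \<forall>j. j \<noteq> i \<longrightarrow> int_row (cc_matrix C pos $ j)"
    then obtain i where i: "\<forall>j. j \<noteq> i \<longrightarrow> int_row (cc_matrix C pos $ j)" by blast
    have "int_row (cc_matrix C pos $ i)" by (rule fourth_row[OF assms i])
    then show "int_matrix (cc_matrix C pos)" unfolding int_matrix_def using i by metis
  qed
  then show ?thesis unfolding int_row_cc' by simp
qed

end
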